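(* Let $n,d\ge 1$, let $X\in\mathbb{R}^{d\times n}$ have columns $x_1,\dots,x_n\in\mathbb{R}^d$, let $y=(y_1,\dots,y_n)^T\in\{-1,+1\}^n$ contain at least one entry equal to $+1$ and at least one entry equal to $-1$, and set $Z=X\,\mathrm{diag}(y)$. Let $q>0$, $C>0$, and let $e\in\mathbb{R}^n$ have all entries positive with $\|e\|_\infty=1$. Let $\kappa=\frac{q+1}{q}q^{\frac{1}{q+1}}$ and let $\alpha^*$ be an optimal solution of the problem $$\min_{\alpha\in\mathbb{R}^n}\Big\{\|Z\alpha\|-\kappa\sum_{i=1}^n\alpha_i^{\frac{q}{q+1}}\;\Big|\;0\le\alpha\le Ce,\ \langle y,\alpha\rangle=0\Big\}.$$ Then there exists $\delta>0$ such that $\alpha^*_i\ge\delta$ for all $i=1,\dots,n$.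
   Context: This problem is (up to sign) the Lagrangian dual of the primal problem $\min\{\sum_{i=1}^n\theta_q(r_i)+C\langle e,\xi\rangle \mid Z^Tw+\beta y+\xi-r=0,\ \|w\|\le1,\ \xi\ge0\}$, where $\theta_q(t)=t^{-q}$ for $t>0$ and $+\infty$ otherwise. $\|\cdot\|$ is the Euclidean norm; inequalities between vectors are componentwise. *)

theory Defs
  imports "HOL-Analysis.Analysis"
begin

definition diag_mat :: "real ^ 'n \<Rightarrow> real ^ 'n ^ 'n" where
  "diag_mat y = (\<chi> i j. if i = j then y $ i else 0)"

definition kappa :: "real \<Rightarrow> real" where
  "kappa q = (q + 1) / q * q powr (1 / (q + 1))"

definition dual_obj :: "real ^ 'n ^ 'd \<Rightarrow> real ^ 'n \<Rightarrow> real \<Rightarrow> real ^ 'n \<Rightarrow> real" where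
  "dual_obj X y q \<alpha> =
     norm ((X ** diag_mat y) *v \<alpha>) - kappa q * (\<Sum>i\<in>UNIV. (\<alpha> $ i) powr (q / (q + 1)))"

definition dual_feasible :: "real ^ 'n \<Rightarrow> real \<Rightarrow> real ^ 'n \<Rightarrow> real ^ 'n \<Rightarrow> bool" where
  "dual_feasible y C e \<alpha> \<longleftrightarrow> (\<forall>i. 0 \<le> \<alpha> $ i \<and> \<alpha> $ i \<le> C * e $ i) \<and> y \<bullet> \<alpha> = 0"

end

theory Submission
  imports Defs
begin

lemma powr_ge_self: "0 \<le> x \<Longrightarrow> x \<le> 1 \<Longrightarrow> p \<le> 1 \<Longrightarrow> x \<le> (x::real) powr p"
  using powr_mono'[of p 1 x] by (cases "x = 0") auto

lemma powr_sub_bound: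
  fixes a t p :: real
  assumes "0 < a" "0 \<le> t" "t \<le> a" "p \<le> 1" "0 \<le> p"
  shows "a powr p - a powr (p - 1) * t \<le> (a - t) powr p"
proof -
  have x: "0 \<le> (a - t) / a" "(a - t) / a \<le> 1" using assms by auto
  have "(a - t) powr p = (a * ((a - t)/a)) powr p" using assms by simp
  also have "\<dots> = a powr p * ((a - t)/a) powr p" by (metis powr_mult assms(1) less_imp_le x(1))
  also have "\<dots> \<ge> a powr p * ((a - t)/a)"
    using mult_left_mono[OF powr_ge_self[OF x assms(4)], of "a powr p"] by simp
  finally have "a powr p * ((a - t)/a) \<le> (a - t) powr p" .
  moreover have "a powr p * ((a - t)/a) = a powr p - a powr (p - 1) * t"
    using assms by (simp add: powr_diff field_simps)
  ultimately show ?thesis by simp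
qed

lemma small_contra:
  fixes F :: "real \<Rightarrow> real" and F0 L \<kappa> p t0 :: real
  assumes "0 < t0" "0 < \<kappa>" "0 < p" "p < 1"
    and up: "\<And>t. 0 < t \<Longrightarrow> t \<le> t0 \<Longrightarrow> F t \<le> F0 + L * t - \<kappa> * t powr p"
    and lo: "\<And>t. 0 < t \<Longrightarrow> t \<le> t0 \<Longrightarrow> F0 \<le> F t"
  shows False
proof -
  define c where "c = \<kappa> / (\<bar>L\<bar> + 1)"
  have c: "c > 0" using assms by (simp add: c_def)
  have "((\<lambda>t. t powr (1 - p)) \<longlongrightarrow> 0) (at_right 0)"
    by (rule tendsto_zero_powrI[where b="1-p"]) (use assms in \<open>auto intro: tendsto_ident_at eventually_at_rightI[of 0 1]\<close>)
  hence e1: "eventually (\<lambda>t. t powr (1 - p) < c) (at_right 0)"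
    using c by (simp add: order_tendsto_iff)
  have e2: "eventually (\<lambda>t. 0 < t \<and> t < t0) (at_right (0::real))"
    using eventually_at_right_real[OF assms(1)] by (auto elim: eventually_mono)
  obtain t where t: "t powr (1 - p) < c" "0 < t" "t < t0"
    using eventually_happens'[OF _ eventually_conj[OF e1 e2]] by auto
  have "F0 \<le> F0 + L * t - \<kappa> * t powr p" using up[of t] lo[of t] t by auto
  hence A: "\<kappa> * t powr p \<le> \<bar>L\<bar> * t" by (smt (verit) mult_right_mono abs_ge_self t(2))
  have tt: "t = t powr p * t powr (1 - p)" using t by (simp add: powr_add[symmetric])
  have tp: "t powr p > 0" using t by simp
  have "\<bar>L\<bar> * t \<le> \<bar>L\<bar> * (t powr p * c)"
    using tt t tp by (metis abs_ge_zero less_eq_real_def mult_left_mono mult_strict_left_mono)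
  also have "\<dots> < \<kappa> * t powr p"
    using tp assms by (simp add: c_def field_simps)
  finally show False using A by simp
qed

lemma step:
  fixes X :: "real ^ 'n ^ 'd" and y e \<alpha>s d :: "real ^ 'n" and q C :: real
  assumes q_pos: "q > 0" and feas: "dual_feasible y C e \<alpha>s"
    and opt: "\<forall>\<alpha>. dual_feasible y C e \<alpha> \<longrightarrow> dual_obj X y q \<alpha>s \<le> dual_obj X y q \<alpha>"
    and k: "\<alpha>s $ k = 0" and dk: "d $ k = 1"
    and dvals: "\<forall>i. d $ i = 1 \<or> d $ i = 0 \<or> d $ i = -1"
    and yd: "y \<bullet> d = 0"
    and up: "\<forall>i. d $ i = 1 \<longrightarrow> \<alpha>s $ i < C * e $ i"
    and dn: "\<forall>i. d $ i = -1 \<longrightarrow> \<alpha>s $ i > 0"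
  shows False
proof -
  define p where "p = q / (q + 1)"
  have p: "0 < p" "p < 1" using q_pos by (auto simp: p_def field_simps)
  define \<kappa> where "\<kappa> = kappa q"
  have \<kappa>: "\<kappa> > 0" using q_pos by (simp add: \<kappa>_def kappa_def)
  define g where "g i = (if d $ i = 1 then C * e $ i - \<alpha>s $ i else if d $ i = -1 then \<alpha>s $ i else 1)" for i
  define t0 where "t0 = Min (range g)"
  have gpos: "g i > 0" for i using up dn by (auto simp: g_def)
  have t0: "t0 > 0" unfolding t0_def using gpos by (subst Min_gr_iff) auto
  have tg: "t0 \<le> g i" for i unfolding t0_def by (rule Min_le) auto
  have fe: "\<alpha>s $ i \<ge> 0" "\<alpha>s $ i \<le> C * e $ i" "y \<bullet> \<alpha>s = 0" for i
    using feas by (auto simp: dual_feasible_def)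
  define M where "M = X ** diag_mat y"
  define B where "B = (\<Sum>i\<in>UNIV. \<alpha>s $ i powr (p - 1))"
  define N where "N = real CARD('n)"
  define L where "L = norm (M *v d)"
  have B0: "B \<ge> 0" unfolding B_def by (intro sum_nonneg) auto
  have Bi: "\<alpha>s $ i powr (p - 1) \<le> B" for i
    unfolding B_def by (rule member_le_sum) auto
  define F where "F t = dual_obj X y q (\<alpha>s + t *\<^sub>R d)" for t
  show False
  proof (rule small_contra[OF t0 _ p, of "\<kappa>" F "dual_obj X y q \<alpha>s" "L + \<kappa> * N * B"])
    show "0 < \<kappa>" by (rule \<kappa>)
  next
    fix t :: real assume t: "0 < t" "t \<le> t0"
    have tgi: "t \<le> g i" for i using tg[of i] t by linarith
    have "dual_feasible y C e (\<alpha>s + t *\<^sub>R d)"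
      unfolding dual_feasible_def
    proof (intro conjI allI)
      fix i
      show "0 \<le> (\<alpha>s + t *\<^sub>R d) $ i" "(\<alpha>s + t *\<^sub>R d) $ i \<le> C * e $ i"
        using dvals[rule_format, of i] tgi[of i] fe(1,2)[of i] t
        by (auto simp: g_def)
    next
      show "y \<bullet> (\<alpha>s + t *\<^sub>R d) = 0" using fe(3) yd by (simp add: inner_add_right)
    qed
    then show "dual_obj X y q \<alpha>s \<le> F t" using opt by (simp add: F_def)
  next
    fix t :: real assume t: "0 < t" "t \<le> t0"
    have tgi: "t \<le> g i" for i using tg[of i] t by linarith
    have nrm: "norm (M *v (\<alpha>s + t *\<^sub>R d)) \<le> norm (M *v \<alpha>s) + L * t"
    proof -
      have "M *v (\<alpha>s + t *\<^sub>R d) = M *v \<alpha>s + t *\<^sub>R (M *v d)"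
        by (simp add: matrix_vector_right_distrib matrix_vector_mult_scaleR)
      hence "norm (M *v (\<alpha>s + t *\<^sub>R d)) \<le> norm (M *v \<alpha>s) + norm (t *\<^sub>R (M *v d))"
        by (metis norm_triangle_ineq)
      thus ?thesis using t by (simp add: L_def mult.commute)
    qed
    have pw: "(\<alpha>s + t *\<^sub>R d) $ i powr p \<ge> \<alpha>s $ i powr p + (if i = k then t powr p else 0) - B * t" for i
    proof -
      have Bt: "B * t \<ge> 0" using B0 t by simp
      consider "i = k" | "i \<noteq> k" "d $ i = 0" | "i \<noteq> k" "d $ i = 1" | "i \<noteq> k" "d $ i = -1"
        using dvals by blast
      then show ?thesis
      proof cases
        case 1 thus ?thesis using k dk Bt by simp
      next
        case 2 thus ?thesis using Bt by simp
      next
        case 3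
        have "\<alpha>s $ i powr p \<le> (\<alpha>s $ i + t) powr p"
          using fe(1)[of i] t p by (intro powr_mono2) auto
        thus ?thesis using 3 Bt by simp
      next
        case 4
        have a: "\<alpha>s $ i > 0" using dn 4 by auto
        have "t \<le> \<alpha>s $ i" using tgi[of i] 4 by (simp add: g_def)
        hence "\<alpha>s $ i powr p - \<alpha>s $ i powr (p - 1) * t \<le> (\<alpha>s $ i - t) powr p"
          using powr_sub_bound[OF a] t p by auto
        moreover have "\<alpha>s $ i powr (p - 1) * t \<le> B * t" using Bi[of i] t by (simp add: mult_right_mono)
        ultimately show ?thesis using 4 by simp
      qed
    qed
    have "(\<Sum>i\<in>UNIV. \<alpha>s $ i powr p + (if i = k then t powr p else 0) - B * t)
          \<le> (\<Sum>i\<in>UNIV. (\<alpha>s + t *\<^sub>R d) $ i powr p)"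
      by (rule sum_mono) (rule pw)
    also have "(\<Sum>i\<in>UNIV. \<alpha>s $ i powr p + (if i = k then t powr p else 0) - B * t)
        = (\<Sum>i\<in>UNIV. \<alpha>s $ i powr p) + t powr p - N * B * t"
      by (simp add: sum.distrib sum_subtractf N_def)
    finally have sm: "(\<Sum>i\<in>UNIV. \<alpha>s $ i powr p) + t powr p - N * B * t
       \<le> (\<Sum>i\<in>UNIV. (\<alpha>s + t *\<^sub>R d) $ i powr p)" .
    have "F t = norm (M *v (\<alpha>s + t *\<^sub>R d)) - \<kappa> * (\<Sum>i\<in>UNIV. (\<alpha>s + t *\<^sub>R d) $ i powr p)"
      by (simp add: F_def dual_obj_def M_def \<kappa>_def p_def)
    moreover have "dual_obj X y q \<alpha>s = norm (M *v \<alpha>s) - \<kappa> * (\<Sum>i\<in>UNIV. \<alpha>s $ i powr p)"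
      by (simp add: dual_obj_def M_def \<kappa>_def p_def)
    moreover have "\<kappa> * ((\<Sum>i\<in>UNIV. \<alpha>s $ i powr p) + t powr p - N * B * t)
       \<le> \<kappa> * (\<Sum>i\<in>UNIV. (\<alpha>s + t *\<^sub>R d) $ i powr p)"
      using sm \<kappa> by (simp add: mult_left_mono)
    ultimately show "F t \<le> dual_obj X y q \<alpha>s + (L + \<kappa> * N * B) * t - \<kappa> * t powr p"
      using nrm by (simp add: algebra_simps)
  qed
qed


theorem proposition2:
  fixes X :: "real ^ 'n ^ 'd" and y e \<alpha>s :: "real ^ 'n" and q C :: real
  assumes y_pm: "\<forall>i. y $ i = 1 \<or> y $ i = -1"
    and y_pos: "\<exists>i. y $ i = 1" and y_neg: "\<exists>i. y $ i = -1"
    and q_pos: "q > 0" and C_pos: "C > 0"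
    and e_pos: "\<forall>i. e $ i > 0" and e_norm: "infnorm e = 1"
    and feas: "dual_feasible y C e \<alpha>s"
    and opt: "\<forall>\<alpha>. dual_feasible y C e \<alpha> \<longrightarrow> dual_obj X y q \<alpha>s \<le> dual_obj X y q \<alpha>"
  shows "\<exists>\<delta>>0. \<forall>i. \<alpha>s $ i \<ge> \<delta>"
proof -
  have fe: "\<alpha>s $ i \<ge> 0" "\<alpha>s $ i \<le> C * e $ i" "y \<bullet> \<alpha>s = 0" for i
    using feas by (auto simp: dual_feasible_def)
  have pos: "\<alpha>s $ i > 0" for i
  proof (rule ccontr)
    assume "\<not> \<alpha>s $ i > 0"
    hence k: "\<alpha>s $ i = 0" using fe(1)[of i] by simp
    define k where "k = i"
    have k: "\<alpha>s $ k = 0" using k by (simp add: k_def)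
    have yk: "y $ k * y $ k = 1" using y_pm by (metis mult_1_left mult_minus1 minus_minus)
    obtain j0 where j0: "y $ j0 = - (y $ k)"
      using y_pm y_pos y_neg by (metis minus_minus)
    have axis_nth': "axis a (1::real) $ b = (if b = a then 1 else 0)" for a b
      by (simp add: axis_def)
    show False
    proof (cases "\<exists>j. y $ j = - (y $ k) \<and> \<alpha>s $ j < C * e $ j")
      case True
      then obtain j where j: "y $ j = - (y $ k)" "\<alpha>s $ j < C * e $ j" by blast
      have jk: "j \<noteq> k" using j(1) yk by auto
      show False
      proof (rule step[OF q_pos feas opt k, of "axis k (1::real) + axis j 1"])
        show "(axis k (1::real) + axis j 1) $ k = 1" using jk by (simp add: axis_def)
        show "\<forall>i. (axis k (1::real) + axis j 1) $ i = 1 \<or> (axis k (1::real) + axis j 1) $ i = 0 \<or> (axis k (1::real) + axis j 1) $ i = -1"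
          using jk by (simp add: axis_def)
        show "y \<bullet> (axis k (1::real) + axis j 1) = 0" using j(1) by (simp add: inner_add_right inner_axis)
        show "\<forall>i. (axis k (1::real) + axis j 1) $ i = 1 \<longrightarrow> \<alpha>s $ i < C * e $ i"
          using jk j(2) k C_pos e_pos by (auto simp: axis_def)
        show "\<forall>i. (axis k (1::real) + axis j 1) $ i = -1 \<longrightarrow> \<alpha>s $ i > 0"
          by (simp add: axis_def)
      qed
    next
      case False
      hence full: "\<And>j. y $ j = - (y $ k) \<Longrightarrow> \<alpha>s $ j \<ge> C * e $ j" by (meson not_le)
      obtain m where m: "y $ m = y $ k" "\<alpha>s $ m > 0"
      proof (rule ccontr)
        assume "\<not> thesis"
        hence zero: "\<And>m. y $ m = y $ k \<Longrightarrow> \<alpha>s $ m \<le> 0" using that by (meson not_le)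
        define h where "h i = y $ k * y $ i * \<alpha>s $ i" for i
        have hsum: "(\<Sum>i\<in>UNIV. h i) = 0"
          using fe(3) by (simp add: h_def inner_vec_def mult.assoc sum_distrib_left[symmetric])
        have hn: "h i \<le> 0" for i
        proof -
          have "y $ i = y $ k \<or> y $ i = - y $ k" using y_pm[rule_format, of i] y_pm[rule_format, of k] by auto
          thus ?thesis
          proof
            assume "y $ i = y $ k" thus ?thesis using zero[of i] yk by (simp add: h_def)
          next
            assume "y $ i = - y $ k" thus ?thesis using fe(1)[of i] yk by (simp add: h_def)
          qed
        qed
        have "C * e $ j0 > 0" using C_pos e_pos by simp
        hence aj: "\<alpha>s $ j0 > 0" using full[OF j0] by linarith
        have "h j0 = - \<alpha>s $ j0" using j0 yk by (simp add: h_def)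
        hence hj: "h j0 < 0" using aj by simp
        have "(\<Sum>i\<in>UNIV. h i) = h j0 + (\<Sum>i\<in>UNIV - {j0}. h i)"
          by (simp add: sum.remove)
        also have "\<dots> < 0" using hj hn by (smt (verit) sum_nonpos)
        finally show False using hsum by simp
      qed
      have mk: "m \<noteq> k" using m k by auto
      show False
      proof (rule step[OF q_pos feas opt k, of "axis k (1::real) - axis m 1"])
        show "(axis k (1::real) - axis m 1) $ k = 1" using mk by (simp add: axis_def)
        show "\<forall>i. (axis k (1::real) - axis m 1) $ i = 1 \<or> (axis k (1::real) - axis m 1) $ i = 0 \<or> (axis k (1::real) - axis m 1) $ i = -1"
          by (simp add: axis_def)
        show "y \<bullet> (axis k (1::real) - axis m 1) = 0" using m(1) by (simp add: inner_diff_right inner_axis)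
        show "\<forall>i. (axis k (1::real) - axis m 1) $ i = 1 \<longrightarrow> \<alpha>s $ i < C * e $ i"
          using mk k C_pos e_pos by (auto simp: axis_def)
        show "\<forall>i. (axis k (1::real) - axis m 1) $ i = -1 \<longrightarrow> \<alpha>s $ i > 0"
          using mk m(2) by (auto simp: axis_def)
      qed
    qed
  qed
  show ?thesis
  proof (intro exI conjI allI)
    show "Min (range (\<lambda>i. \<alpha>s $ i)) > 0" using pos by (subst Min_gr_iff) auto
    fix i show "Min (range (\<lambda>i. \<alpha>s $ i)) \<le> \<alpha>s $ i" by (rule Min_le) auto
  qed
qed

end
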